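(* For every positive integer $k$, $$W(2k+1,2)=\frac{1}{2^{2k-1}}\sum_{j=1}^k(2^{2j+1}-1)\,\zeta(2j+1)\,\bar\zeta(2k-2j).$$
   Context: For positive integers $k_1,k_2$, $\bar T(k_1,k_2):=4\sum_{0<n_1<n_2}\frac{(-1)^{n_2}}{(2n_1-1)^{k_1}(2n_2-2)^{k_2}}$, and $W(K,2):=\sum_{k_1+k_2=K,\,k_1,k_2\ge1}\bar T(k_1,k_2)$. $\zeta$ is the Riemann zeta function; $\bar\zeta(s):=\sum_{n\ge1}(-1)^{n-1}n^{-s}$ for $s\ge1$ and $\bar\zeta(0):=1/2$. *)

theory Defs
  imports Complex_Main
begin

text \<open>Riemann zeta at positive integers s (convergent for s >= 2).\<close>
definition zeta_nat :: "nat \<Rightarrow> real" where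
  "zeta_nat s = (\<Sum>n. 1 / (real (Suc n)) ^ s)"

definition zetabar :: "nat \<Rightarrow> real" where
  "zetabar s = (if s = 0 then 1 / 2 else (\<Sum>n. (-1) ^ n / (real (Suc n)) ^ s))"

definition Tbar :: "nat \<Rightarrow> nat \<Rightarrow> real" where
  "Tbar k1 k2 = 4 * (\<Sum>n2. \<Sum>n1\<in>{0<..<n2}.
      (-1) ^ n2 / ((2 * real n1 - 1) ^ k1 * (2 * real n2 - 2) ^ k2))"

definition W2 :: "nat \<Rightarrow> real" where
  "W2 K = (\<Sum>k1\<in>{1..K-1}. Tbar k1 (K - k1))"

end

theory Submission
  imports Defs "HOL-Analysis.Analysis" "HOL-Real_Asymp.Real_Asymp"
begin

lemma tele_gen:
  fixes x y :: real
  assumes "x \<noteq> 0" "y \<noteq> 0"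
  shows "(y - x) * (\<Sum>i=1..n. 1 / (x^i * y^(Suc n - i))) = 1/x^n - 1/y^n"
proof (induction n)
  case 0 then show ?case by simp
next
  case (Suc n)
  have eq: "(\<Sum>i=1..Suc n. 1 / (x^i * y^(Suc (Suc n) - i))) =
      (1/y) * (\<Sum>i=1..n. 1 / (x^i * y^(Suc n - i))) + 1/(x^Suc n * y)"
  proof -
    have "(\<Sum>i=1..Suc n. 1 / (x^i * y^(Suc (Suc n) - i))) =
        (\<Sum>i=1..n. 1 / (x^i * y^(Suc (Suc n) - i))) + 1/(x^Suc n * y)"
      by (simp add: Suc_diff_le)
    also have "(\<Sum>i=1..n. 1 / (x^i * y^(Suc (Suc n) - i))) = (\<Sum>i=1..n. (1/y) * (1 / (x^i * y^(Suc n - i))))"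
      by (intro sum.cong refl) (simp add: Suc_diff_le)
    finally show ?thesis by (simp only: sum_distrib_left)
  qed
  have "(y - x) * (\<Sum>i=1..Suc n. 1 / (x^i * y^(Suc (Suc n) - i))) =
     (1/y) * ((y - x) * (\<Sum>i=1..n. 1 / (x^i * y^(Suc n - i)))) + (y - x)/(x^Suc n * y)"
    unfolding eq by (simp only: distrib_left mult.left_commute times_divide_eq_right mult_1_right)
  also have "\<dots> = (1/y) * (1/x^n - 1/y^n) + (y - x)/(x^Suc n * y)" using Suc by simp
  also have "\<dots> = 1/x^Suc n - 1/y^Suc n" using assms by (simp add: field_simps)
  finally show ?case .
qed

lemma sum_even_odd_split:
  fixes f :: "nat \<Rightarrow> real"
  shows "(\<Sum>i=1..2*k. f i) = (\<Sum>j=1..k. f (2*j-1)) + (\<Sum>j=1..k. f (2*j))"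
proof (induction k)
  case 0 then show ?case by simp
next
  case (Suc k)
  have "{1..2*Suc k} = insert (2*k+2) (insert (2*k+1) {1..2*k})" by auto
  then have "(\<Sum>i=1..2*Suc k. f i) = f (2*k+2) + f (2*k+1) + (\<Sum>i=1..2*k. f i)" by simp
  then show ?case using Suc by simp
qed



definition bb :: "nat \<Rightarrow> real" where "bb n = 2 * real n + 1"
definition NN :: "nat \<Rightarrow> real" where "NN m = 2 * real m + 2"
definition mn :: "nat \<Rightarrow> nat \<Rightarrow> nat \<Rightarrow> nat \<Rightarrow> real" where
  "mn k i n m = 1 / (bb n ^ i * NN m ^ (Suc (2*k) - i))"
definition gk :: "nat \<Rightarrow> nat \<Rightarrow> nat \<Rightarrow> real" where
  "gk k n m = (\<Sum>i=1..2*k. mn k i n m)"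
definition Od :: "nat \<Rightarrow> nat \<Rightarrow> nat \<Rightarrow> real" where
  "Od k n m = (\<Sum>j=1..k. mn k (2*j-1) n m)"

lemma bb_pos: "bb n > 0" and NN_pos: "NN m > 0" and bb_ge1: "bb n \<ge> 1" and NN_ge2: "NN m \<ge> 2"
  by (auto simp: bb_def NN_def)

lemma bb_ne_NN: "bb n \<noteq> NN m"
proof
  assume "bb n = NN m"
  then have "2 * real n + 1 = 2 * real m + 2" by (simp add: bb_def NN_def)
  then have "real (2*n+1) = real (2*m+2)" by simp
  then have "2*n+1 = 2*m+2" by (simp only: of_nat_eq_iff)
  then show False by presburger
qed

lemma bb_lt_NN_iff: "bb n < NN m \<longleftrightarrow> n \<le> m"
  by (auto simp: bb_def NN_def)

lemma pair_identity:
  "(if n \<le> m then gk k n m else 0) - Od k n m =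
     (1/2) * (1/bb n^(2*k) - 1/NN m^(2*k)) * (1/\<bar>NN m - bb n\<bar> + 1/(NN m + bb n))"
proof -
  define x where "x = bb n"
  define y where "y = NN m"
  have x0: "x > 0" and y0: "y > 0" and xy: "x \<noteq> y"
    using bb_pos NN_pos bb_ne_NN by (auto simp: x_def y_def)
  define D where "D = 1/x^(2*k) - 1/y^(2*k)"
  define Ev where "Ev = (\<Sum>j=1..k. mn k (2*j) n m)"
  have g1: "(y - x) * gk k n m = D"
    using tele_gen[of x y "2*k"] x0 y0 by (simp add: gk_def mn_def x_def y_def D_def)
  have "(y - (-x)) * (\<Sum>i=1..2*k. 1 / ((-x)^i * y^(Suc (2*k) - i))) = 1/(-x)^(2*k) - 1/y^(2*k)"
    using tele_gen[of "-x" y "2*k"] x0 y0 by simp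
  moreover have "(\<Sum>i=1..2*k. 1 / ((-x)^i * y^(Suc (2*k) - i))) = 
      (\<Sum>j=1..k. 1 / ((-x)^(2*j-1) * y^(Suc (2*k) - (2*j-1)))) + (\<Sum>j=1..k. 1 / ((-x)^(2*j) * y^(Suc (2*k) - (2*j))))"
    by (rule sum_even_odd_split)
  moreover have "(\<Sum>j=1..k. 1 / ((-x)^(2*j-1) * y^(Suc (2*k) - (2*j-1)))) = - Od k n m"
    unfolding Od_def sum_negf[symmetric]
  proof (intro sum.cong refl)
    fix j assume "j \<in> {1..k}"
    then have "odd (2*j-1)" by auto
    then have "(-x)^(2*j-1) = - (x^(2*j-1))" by (simp add: power_minus_odd)
    then show "1 / ((-x)^(2*j-1) * y^(Suc (2*k) - (2*j-1))) = - mn k (2*j-1) n m"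
      by (simp add: mn_def x_def y_def)
  qed
  moreover have "(\<Sum>j=1..k. 1 / ((-x)^(2*j) * y^(Suc (2*k) - (2*j)))) = Ev"
    unfolding Ev_def by (intro sum.cong refl) (simp add: mn_def x_def y_def power_mult)
  moreover have "(1::real)/(-x)^(2*k) = 1/x^(2*k)" by (simp add: power_mult)
  ultimately have g2: "(y + x) * (Ev - Od k n m) = D" by (simp add: D_def)
  have g3: "gk k n m = Ev + Od k n m"
    unfolding gk_def Ev_def Od_def using sum_even_odd_split[of "\<lambda>i. mn k i n m" k] by simp
  have yx1: "y - x \<noteq> 0" and yx2: "y + x \<noteq> 0" using xy x0 y0 by auto
  have G: "gk k n m = D / (y - x)" using g1 yx1 by (simp add: field_simps)
  have H: "Ev - Od k n m = D / (y + x)" using g2 yx2 by (simp add: field_simps)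
  have O: "Od k n m = (D/(y-x) - D/(y+x))/2" using G H g3 by simp
  have Dx: "1/bb n^(2*k) - 1/NN m^(2*k) = D" by (simp add: D_def x_def y_def)
  have s1: "NN m - bb n = y - x" "NN m + bb n = y + x" by (simp_all add: x_def y_def)
  show ?thesis
  proof (cases "n \<le> m")
    case True
    then have "x < y" using bb_lt_NN_iff by (simp add: x_def y_def)
    then have a: "\<bar>y - x\<bar> = y - x" by simp
    have "gk k n m - Od k n m = (1/2) * D * (1/(y-x) + 1/(y+x))"
      unfolding G O by (simp add: field_simps)
    then show ?thesis using True by (simp only: Dx s1 a if_True)
  next
    case False
    then have "y < x" using bb_lt_NN_iff[of n m] bb_ne_NN[of n m] by (simp add: x_def y_def)
    then have a: "\<bar>y - x\<bar> = -(y - x)" by simp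
    have m1: "1/(-(y-x)) = - (1/(y-x))" by (rule divide_minus_right)
    have "0 - Od k n m = (1/2) * (- (D/(y-x)) + D/(y+x))"
    proof -
      define u where "u = D/(y-x)"
      define v where "v = D/(y+x)"
      have "Od k n m = (u - v)/2" using O by (simp add: u_def v_def)
      then show ?thesis by (simp add: u_def[symmetric] v_def[symmetric])
    qed
    also have "\<dots> = (1/2) * D * (1/(-(y-x)) + 1/(y+x))"
      unfolding m1 by (simp add: right_diff_distrib left_diff_distrib distrib_left)
    finally have "0 - Od k n m = (1/2) * D * (1/(-(y-x)) + 1/(y+x))" .
    then show ?thesis using False by (simp only: Dx s1 a if_False)
  qed
qed



definition A0 :: "nat \<Rightarrow> real" where "A0 x = (\<Sum>j<x. (-1)^j / (2 * real j + 1))"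
definition H0 :: "nat \<Rightarrow> real" where "H0 x = (\<Sum>j<x. 1 / (2 * real j + 1))"
definition AZ :: "int \<Rightarrow> real" where "AZ z = A0 (nat \<bar>z\<bar>)"
definition HZ :: "int \<Rightarrow> real" where "HZ z = (if z \<ge> 0 then H0 (nat z) else - H0 (nat (-z)))"

lemma HZ_step: "HZ (z+1) - HZ z = 1 / \<bar>2 * real_of_int z + 1\<bar>"
proof (cases "z \<ge> 0")
  case True
  then have "nat (z+1) = Suc (nat z)" by simp
  then show ?thesis using True by (simp add: HZ_def H0_def)
next
  case False
  then have "nat (-z) = Suc (nat (-(z+1)))" by simp
  moreover have "\<bar>2 * real_of_int z + 1\<bar> = 2 * real (nat (-(z+1))) + 1" using False by simp
  ultimately show ?thesis using False by (simp add: HZ_def H0_def)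
qed

lemma AZ_step: "AZ (z+1) - AZ z = (-1)^(nat \<bar>z\<bar>) / \<bar>2 * real_of_int z + 1\<bar>"
proof (cases "z \<ge> 0")
  case True
  then have "nat \<bar>z+1\<bar> = Suc (nat \<bar>z\<bar>)" by simp
  then show ?thesis using True by (simp add: AZ_def A0_def)
next
  case False
  define w where "w = nat (-(z+1))"
  have 1: "nat \<bar>z\<bar> = Suc w" using False by (simp add: w_def)
  have 2: "nat \<bar>z+1\<bar> = w" using False by (simp add: w_def)
  have 3: "\<bar>2 * real_of_int z + 1\<bar> = 2 * real w + 1" using False by (simp add: w_def)
  show ?thesis unfolding AZ_def 1 2 3 by (simp add: A0_def)
qed

lemma neg1_parity:
  fixes a b :: nat
  assumes "even (a + b)"
  shows "(-1::real)^a = (-1)^b"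
proof -
  have "(-1::real)^a * (-1)^b = 1" using assms by (simp add: power_add[symmetric])
  moreover have "(-1::real)^b * (-1)^b = 1" by (simp add: power_add[symmetric])
  ultimately show ?thesis by (metis mult.commute mult_cancel_right one_neq_zero power_eq_0_iff neg_one_power_add_eq_neg_one_power_diff zero_neq_neg_one)
qed

definition Pf :: "nat \<Rightarrow> nat \<Rightarrow> real" where
  "Pf n R = (\<Sum>m<R-n. (-1)^m * (1/\<bar>NN m - bb n\<bar> + 1/(NN m + bb n)))"
definition Qf :: "nat \<Rightarrow> nat \<Rightarrow> real" where
  "Qf m R = (\<Sum>n<R-m. 1/\<bar>NN m - bb n\<bar> + 1/(NN m + bb n))"

lemma NN_minus_bb: "NN m - bb n = 2 * real_of_int (int m - int n) + 1"
  by (simp add: NN_def bb_def)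
lemma NN_plus_bb: "NN m + bb n = 2 * real (n + m) + 3"
  by (simp add: NN_def bb_def)

lemma Pf_closed: "Pf n (n + t) = (-1)^n * (AZ (int t - int n) - A0 (n + t + 1)) + 1 / bb n"
proof (induction t)
  case 0
  have "AZ (- int n) = A0 n" by (simp add: AZ_def)
  then show ?case by (simp add: Pf_def A0_def bb_def)
next
  case (Suc t)
  have L: "Pf n (n + Suc t) = Pf n (n + t) + (-1)^t * (1/\<bar>NN t - bb n\<bar> + 1/(NN t + bb n))"
    by (simp add: Pf_def)
  have e1: "A0 (n + Suc t + 1) - A0 (n + t + 1) = (-1)^(n+t+1) / (2 * real (n+t) + 3)"
    by (simp add: A0_def algebra_simps)
  have e2: "AZ (int (Suc t) - int n) - AZ (int t - int n) = (-1)^(nat \<bar>int t - int n\<bar>) / \<bar>NN t - bb n\<bar>"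
  proof -
    have "AZ (int (Suc t) - int n) = AZ ((int t - int n) + 1)" by (rule arg_cong[where f=AZ]) simp
    moreover have "\<bar>NN t - bb n\<bar> = \<bar>2 * real_of_int (int t - int n) + 1\<bar>" by (simp add: NN_minus_bb)
    ultimately show ?thesis using AZ_step[of "int t - int n"] by (simp only:)
  qed
  have p1: "(-1::real)^n * (-1)^(nat \<bar>int t - int n\<bar>) = (-1)^t"
  proof -
    have "even (n + nat \<bar>int t - int n\<bar> + t)" by (cases "t \<ge> n") (auto simp: nat_diff_distrib)
    then have "(-1::real)^(n + nat \<bar>int t - int n\<bar>) = (-1)^t" by (rule neg1_parity)
    then show ?thesis by (simp add: power_add)
  qed
  have p2: "(-1::real)^n * (-1)^(n+t+1) = - ((-1)^t)"
  proof -
    have "(-1::real)^n * (-1)^(n+t+1) = (-1)^(2*n) * (-1)^t * (-1)" by (simp add: power_add power_mult_distrib mult_2)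
    then show ?thesis by simp
  qed
  have "(-1)^n * (AZ (int (Suc t) - int n) - A0 (n + Suc t + 1)) + 1 / bb n
      = ((-1)^n * (AZ (int t - int n) - A0 (n + t + 1)) + 1 / bb n)
        + (-1)^n * (AZ (int (Suc t) - int n) - AZ (int t - int n))
        - (-1)^n * (A0 (n + Suc t + 1) - A0 (n + t + 1))"
    by (simp add: algebra_simps)
  also have "\<dots> = Pf n (n + t) + (-1)^t / \<bar>NN t - bb n\<bar> + (-1)^t / (NN t + bb n)"
    unfolding e1 e2 Suc.IH[symmetric] using p1 p2
    by (simp add: NN_plus_bb mult.assoc[symmetric] algebra_simps)
  finally show ?case using L by (simp add: algebra_simps)
qed

lemma Qf_closed: "Qf m (m + t) = H0 (m + t + 1) + HZ (int t - int m - 1)"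
proof (induction t)
  case 0
  have "HZ (- int m - 1) = - H0 (m+1)" by (simp add: HZ_def nat_add_distrib)
  then show ?case by (simp add: Qf_def)
next
  case (Suc t)
  have L: "Qf m (m + Suc t) = Qf m (m + t) + (1/\<bar>NN m - bb t\<bar> + 1/(NN m + bb t))"
    by (simp add: Qf_def)
  have e1: "H0 (m + Suc t + 1) - H0 (m + t + 1) = 1 / (NN m + bb t)"
    by (simp add: H0_def NN_plus_bb algebra_simps)
  have "\<bar>NN m - bb t\<bar> = \<bar>2 * real_of_int (int t - int m - 1) + 1\<bar>"
    by (simp add: NN_minus_bb abs_minus_commute algebra_simps)
  then have e2: "HZ (int (Suc t) - int m - 1) - HZ (int t - int m - 1) = 1 / \<bar>NN m - bb t\<bar>"
    using HZ_step[of "int t - int m - 1"] by (simp add: algebra_simps)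
  show ?case using L e1 e2 Suc.IH by (simp add: algebra_simps)
qed



lemma alt_bound:
  fixes a :: "nat \<Rightarrow> real"
  assumes "\<And>i. a (Suc i) \<le> a i" "\<And>i. 0 \<le> a i"
  shows "0 \<le> (\<Sum>i<x. (-1)^i * a i) \<and> (\<Sum>i<x. (-1)^i * a i) \<le> a 0"
  using assms
proof (induction x arbitrary: a)
  case 0 then show ?case by simp
next
  case (Suc x)
  have IH: "0 \<le> (\<Sum>i<x. (-1)^i * a (Suc i)) \<and> (\<Sum>i<x. (-1)^i * a (Suc i)) \<le> a (Suc 0)"
    using Suc.IH[of "\<lambda>i. a (Suc i)"] Suc.prems by auto
  have "(\<Sum>i<Suc x. (-1)^i * a i) = a 0 - (\<Sum>i<x. (-1)^i * a (Suc i))"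
    by (subst sum.lessThan_Suc_shift) (simp add: sum_negf[symmetric])
  then show ?case using IH Suc.prems(1)[of 0] Suc.prems(2)[of 0] by auto
qed

lemma alt_abs_bound:
  fixes a :: "nat \<Rightarrow> real"
  assumes "\<And>i. a (Suc i) \<le> a i" "\<And>i. 0 \<le> a i"
  shows "\<bar>\<Sum>i<x. (-1)^i * a i\<bar> \<le> a 0"
proof -
  have "0 \<le> (\<Sum>i<x. (-1)^i * a i) \<and> (\<Sum>i<x. (-1)^i * a i) \<le> a 0"
    by (rule alt_bound) (use assms in auto)
  then show ?thesis by auto
qed

lemma A0_bound: "\<bar>A0 x\<bar> \<le> 1"
proof -
  have "\<bar>\<Sum>i<x. (-1)^i * (1 / (2 * real i + 1))\<bar> \<le> 1 / (2 * real 0 + 1)"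
    by (rule alt_abs_bound) (auto simp: frac_le)
  then show ?thesis by (simp add: A0_def)
qed

lemma A0_conv: "convergent A0"
proof -
  have "summable (\<lambda>i. (-1)^i * (1 / (2 * real i + 1)))"
  proof (rule summable_Leibniz'(1))
    show "(\<lambda>i. 1 / (2 * real i + 1)) \<longlonglongrightarrow> 0" by real_asymp
  qed (auto simp: frac_le)
  then have "A0 \<longlonglongrightarrow> (\<Sum>i. (-1)^i * (1 / (2 * real i + 1)))"
    unfolding A0_def[abs_def] by (simp add: summable_LIMSEQ)
  then show ?thesis by (auto simp: convergent_def)
qed

lemma H0_nonneg: "0 \<le> H0 x" by (simp add: H0_def sum_nonneg)
lemma H0_mono: "a \<le> b \<Longrightarrow> H0 a \<le> H0 b"
  unfolding H0_def by (rule sum_mono2) auto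

lemma H0_shift_le: "H0 (a + c) - H0 a \<le> H0 c"
proof -
  have "H0 (a + c) - H0 a = (\<Sum>j<c. 1 / (2 * real (a + j) + 1))"
    by (induction c) (simp_all add: H0_def)
  also have "\<dots> \<le> (\<Sum>j<c. 1 / (2 * real j + 1))"
    by (intro sum_mono) (simp add: frac_le)
  finally show ?thesis by (simp add: H0_def)
qed

lemma H0_shift_le2: "H0 (a + c) - H0 a \<le> real c / (2 * real a + 1)"
proof -
  have "H0 (a + c) - H0 a = (\<Sum>j<c. 1 / (2 * real (a + j) + 1))"
    by (induction c) (simp_all add: H0_def)
  also have "\<dots> \<le> (\<Sum>j<c. 1 / (2 * real a + 1))"
    by (intro sum_mono) (simp add: frac_le)
  finally show ?thesis by simp
qed

lemma H0_shift_nonneg: "0 \<le> H0 (a + c) - H0 a"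
  using H0_mono[of a "a+c"] by simp

lemma H0_sqrt: "H0 c \<le> 2 * sqrt (real c)"
proof (induction c)
  case 0 then show ?case by (simp add: H0_def)
next
  case (Suc c)
  have s1: "sqrt (real (Suc c)) \<le> 2 * real c + 1"
  proof -
    have "sqrt (real (Suc c)) \<le> sqrt ((real (Suc c))^2)"
      by (rule real_sqrt_le_mono) (simp add: power2_eq_square)
    then show ?thesis by simp
  qed
  have pos: "sqrt (real c) + sqrt (real (Suc c)) > 0" by (simp add: add_nonneg_pos)
  have "(sqrt (real (Suc c)) - sqrt (real c)) * (sqrt (real c) + sqrt (real (Suc c))) = 1"
    by (simp add: algebra_simps)
  then have d: "sqrt (real (Suc c)) - sqrt (real c) = 1 / (sqrt (real c) + sqrt (real (Suc c)))"
    using pos by (simp add: field_simps)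
  have "1 / (2 * real c + 1) \<le> 2 / (sqrt (real c) + sqrt (real (Suc c)))"
  proof -
    have "sqrt (real c) \<le> sqrt (real (Suc c))" by simp
    then have t: "sqrt (real c) \<le> 2 * real c + 1" using s1 by (rule order_trans)
    have "sqrt (real c) + sqrt (real (Suc c)) \<le> (2 * real c + 1) + (2 * real c + 1)"
      by (rule add_mono[OF t s1])
    then have "sqrt (real c) + sqrt (real (Suc c)) \<le> 2 * (2 * real c + 1)" by simp
    then show ?thesis using pos by (simp add: field_simps)
  qed
  then have "1 / (2 * real c + 1) \<le> 2 * (sqrt (real (Suc c)) - sqrt (real c))" using d by simp
  then show ?case using Suc by (simp add: H0_def)
qed

lemma summable_inv_sq: "summable (\<lambda>n. 1 / (real (Suc n))^2)"
proof -
  have "summable (\<lambda>n. inverse (real n ^ 2))" by (rule inverse_power_summable) simp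
  then have "summable (\<lambda>n. inverse (real (Suc n) ^ 2))" by (subst summable_Suc_iff)
  then show ?thesis by (simp add: inverse_eq_divide)
qed

lemma summable_bb_sq: "summable (\<lambda>n. 1 / bb n ^ 2)"
  by (rule summable_comparison_test'[OF summable_inv_sq, of 0])
     (auto simp: bb_def intro!: frac_le power_mono)

lemma summable_NN_sq: "summable (\<lambda>n. 1 / NN n ^ 2)"
  by (rule summable_comparison_test'[OF summable_inv_sq, of 0])
     (auto simp: NN_def intro!: frac_le power_mono)

lemma summable_32: "summable (\<lambda>m. sqrt (real (Suc m)) / (real (Suc m))^2)"
proof -
  have "summable (\<lambda>n. real n powr (-3/2))" by (subst summable_real_powr_iff) simp
  then have s: "summable (\<lambda>n. real (Suc n) powr (-3/2))" by (subst summable_Suc_iff)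
  have e: "sqrt (real (Suc m)) / (real (Suc m))^2 = real (Suc m) powr (-3/2)" for m
  proof -
    have x: "real (Suc m) > 0" by simp
    have "sqrt (real (Suc m)) = real (Suc m) powr (1/2)" by (simp add: powr_half_sqrt)
    moreover have "(real (Suc m))^2 = real (Suc m) powr 2" using x by (simp add: powr_realpow)
    ultimately have "sqrt (real (Suc m)) / (real (Suc m))^2 = real (Suc m) powr (1/2) / real (Suc m) powr 2" by simp
    also have "\<dots> = real (Suc m) powr (1/2 - 2)" using x by (simp only: powr_diff)
    also have "(1/2::real) - 2 = -3/2" by simp
    finally show ?thesis by simp
  qed
  show ?thesis unfolding e using s .
qed

lemma tannery_fin:
  fixes f :: "nat \<Rightarrow> nat \<Rightarrow> real"
  assumes lim: "\<And>n. (\<lambda>R. f R n) \<longlonglongrightarrow> l n"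
    and bnd: "\<And>R n. n < R \<Longrightarrow> \<bar>f R n\<bar> \<le> M n"
    and sM: "summable M"
  shows "(\<lambda>R. \<Sum>n<R. f R n) \<longlonglongrightarrow> (\<Sum>n. l n)"
proof -
  define a where "a n R = (if n < R then f R n else 0)" for n R
  have lim': "(\<lambda>R. a n R) \<longlonglongrightarrow> l n" for n
  proof -
    have ev: "eventually (\<lambda>R. f R n = a n R) sequentially"
      using eventually_gt_at_top[of n] by eventually_elim (simp add: a_def)
    show ?thesis using lim[of n] tendsto_cong[OF ev] by simp
  qed
  have b: "eventually (\<lambda>(n,R). norm (a n R) \<le> M n) (at_top \<times>\<^sub>F sequentially)"
  proof (intro always_eventually allI)
    fix p :: "nat \<times> nat"
    obtain n R where p: "p = (n, R)" by (cases p)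
    have "M n \<ge> 0" using bnd[of n "Suc n"] by linarith
    then show "(\<lambda>(n,R). norm (a n R) \<le> M n) p" using bnd[of n R] by (auto simp: a_def p)
  qed
  have "((\<lambda>R. suminf (\<lambda>n. a n R)) \<longlongrightarrow> suminf l) sequentially"
    using tannerys_theorem[of a l sequentially M, OF lim' b sM] by simp
  moreover have "suminf (\<lambda>n. a n R) = (\<Sum>n<R. f R n)" for R
  proof -
    have "suminf (\<lambda>n. a n R) = (\<Sum>n\<in>{..<R}. a n R)"
      by (rule suminf_finite) (auto simp: a_def)
    then show ?thesis by (simp add: a_def)
  qed
  ultimately show ?thesis by simp
qed



definition Tri :: "nat \<Rightarrow> (nat \<Rightarrow> nat \<Rightarrow> real) \<Rightarrow> real" where
  "Tri R f = (\<Sum>m<R. \<Sum>n<R-m. f n m)"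

lemma Tri_step: "Tri (Suc R) f = Tri R f + (\<Sum>m<Suc R. f (R-m) m)"
proof -
  have "Tri (Suc R) f = (\<Sum>m<Suc R. (\<Sum>n<R-m. f n m) + f (R-m) m)"
    unfolding Tri_def by (intro sum.cong refl) (simp add: Suc_diff_le)
  also have "\<dots> = (\<Sum>m<Suc R. \<Sum>n<R-m. f n m) + (\<Sum>m<Suc R. f (R-m) m)"
    by (simp add: sum.distrib)
  also have "(\<Sum>m<Suc R. \<Sum>n<R-m. f n m) = Tri R f" by (simp add: Tri_def)
  finally show ?thesis .
qed

lemma Tri_swap: "Tri R f = (\<Sum>n<R. \<Sum>m<R-n. f n m)"
proof (induction R)
  case 0 then show ?case by (simp add: Tri_def)
next
  case (Suc R)
  have a: "(\<Sum>n<Suc R. \<Sum>m<Suc R-n. f n m) = (\<Sum>n<R. \<Sum>m<R-n. f n m) + (\<Sum>n<Suc R. f n (R-n))"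
  proof -
    have "(\<Sum>n<Suc R. \<Sum>m<Suc R-n. f n m) = (\<Sum>n<Suc R. (\<Sum>m<R-n. f n m) + f n (R-n))"
      by (intro sum.cong refl) (simp add: Suc_diff_le)
    also have "\<dots> = (\<Sum>n<Suc R. \<Sum>m<R-n. f n m) + (\<Sum>n<Suc R. f n (R-n))"
      by (simp add: sum.distrib)
    finally show ?thesis by simp
  qed
  have b: "(\<Sum>m<Suc R. f (R-m) m) = (\<Sum>n<Suc R. f n (R-n))"
  proof -
    have "(\<Sum>n<Suc R. f n (R-n)) = (\<Sum>i<Suc R. (\<lambda>n. f n (R-n)) (Suc R - Suc i))"
      by (rule sum.nat_diff_reindex[symmetric])
    also have "\<dots> = (\<Sum>m<Suc R. f (R-m) m)"
      by (intro sum.cong refl) auto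
    finally show ?thesis by simp
  qed
  show ?case unfolding Tri_step Suc.IH a b ..
qed

lemma Tri_diff: "Tri R (\<lambda>n m. f n m - g n m) = Tri R f - Tri R g"
  by (simp add: Tri_def sum_subtractf)
lemma Tri_add: "Tri R (\<lambda>n m. f n m + g n m) = Tri R f + Tri R g"
  by (simp add: Tri_def sum.distrib)
lemma Tri_cmult: "Tri R (\<lambda>n m. c * f n m) = c * Tri R f"
  by (simp add: Tri_def sum_distrib_left)
lemma Tri_sum: "Tri R (\<lambda>n m. \<Sum>j\<in>J. f j n m) = (\<Sum>j\<in>J. Tri R (f j))"
  unfolding Tri_def by (subst sum.swap) (simp add: sum.swap[of _ J])

definition TL :: "nat \<Rightarrow> nat \<Rightarrow> real" where
  "TL k R = (\<Sum>m<R. (-1)^m * (\<Sum>n<R-m. if n \<le> m then gk k n m else 0))"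
definition XA :: "nat \<Rightarrow> nat \<Rightarrow> real" where
  "XA k R = (\<Sum>n<R. (1 / bb n ^ (2*k)) * Pf n R)"
definition XB :: "nat \<Rightarrow> nat \<Rightarrow> real" where
  "XB k R = (\<Sum>m<R. ((-1)^m / NN m ^ (2*k)) * Qf m R)"

lemma fin_id: "TL k R - Tri R (\<lambda>n m. (-1)^m * Od k n m) = (1/2) * (XA k R - XB k R)"
proof -
  define w where "w n m = (1/\<bar>NN m - bb n\<bar> + 1/(NN m + bb n))" for n m
  have "TL k R = Tri R (\<lambda>n m. (-1)^m * (if n \<le> m then gk k n m else 0))"
    by (simp add: TL_def Tri_def sum_distrib_left)
  then have "TL k R - Tri R (\<lambda>n m. (-1)^m * Od k n m)
      = Tri R (\<lambda>n m. (-1)^m * ((if n \<le> m then gk k n m else 0) - Od k n m))"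
    by (simp add: Tri_diff[symmetric] algebra_simps)
  also have "\<dots> = Tri R (\<lambda>n m. (1/2) * ((1 / bb n ^ (2*k)) * ((-1)^m * w n m) - ((-1)^m / NN m ^ (2*k)) * w n m))"
    unfolding pair_identity w_def by (simp add: algebra_simps)
  also have "\<dots> = (1/2) * (Tri R (\<lambda>n m. (1 / bb n ^ (2*k)) * ((-1)^m * w n m)) - Tri R (\<lambda>n m. ((-1)^m / NN m ^ (2*k)) * w n m))"
    by (subst Tri_cmult, subst Tri_diff, rule refl)
  also have "Tri R (\<lambda>n m. (1 / bb n ^ (2*k)) * ((-1)^m * w n m)) = XA k R"
    unfolding Tri_swap XA_def Pf_def w_def by (simp add: sum_distrib_left)
  also have "Tri R (\<lambda>n m. ((-1)^m / NN m ^ (2*k)) * w n m) = XB k R"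
    unfolding Tri_def XB_def Qf_def w_def by (simp add: sum_distrib_left)
  finally show ?thesis .
qed



definition lam :: "nat \<Rightarrow> real" where "lam s = (\<Sum>n. 1 / bb n ^ s)"
definition Bp :: "nat \<Rightarrow> nat \<Rightarrow> real" where "Bp e x = (\<Sum>m<x. (-1)^m / NN m ^ e)"
definition bet :: "nat \<Rightarrow> real" where "bet e = (\<Sum>m. (-1)^m / NN m ^ e)"

lemma inv_bb_pow_le: "i \<ge> 2 \<Longrightarrow> 1 / bb n ^ i \<le> 1 / bb n ^ 2"
  using bb_ge1[of n] by (intro divide_left_mono power_increasing) auto
lemma inv_NN_pow_le: "i \<ge> 2 \<Longrightarrow> 1 / NN n ^ i \<le> 1 / NN n ^ 2"
  using NN_ge2[of n] by (intro divide_left_mono power_increasing) auto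

lemma summable_lam: "s \<ge> 2 \<Longrightarrow> summable (\<lambda>n. 1 / bb n ^ s)"
  by (rule summable_comparison_test'[OF summable_bb_sq, of 0]) (auto simp: inv_bb_pow_le bb_pos less_imp_le)

lemma summable_bet: "e \<ge> 2 \<Longrightarrow> summable (\<lambda>m. (-1)^m / NN m ^ e)"
  by (rule summable_comparison_test'[OF summable_NN_sq, of 0]) (auto simp: inv_NN_pow_le NN_pos less_imp_le)

lemma Od_split: "Tri R (\<lambda>n m. (-1)^m * Od k n m) = (\<Sum>j=1..k. Tri R (\<lambda>n m. (-1)^m * mn k (2*j-1) n m))"
  unfolding Od_def sum_distrib_left by (rule Tri_sum)

lemma Tri_mono1: "Tri R (\<lambda>n m. (-1)^m * mn k 1 n m) = (\<Sum>m<R. ((-1)^m / NN m ^ (2*k)) * H0 (R-m))"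
  unfolding Tri_def H0_def by (intro sum.cong refl) (simp add: mn_def sum_distrib_left bb_def mult.commute)

lemma Tri_monoi: "Tri R (\<lambda>n m. (-1)^m * mn k i n m) = (\<Sum>n<R. (1 / bb n ^ i) * Bp (Suc (2*k) - i) (R-n))"
  unfolding Tri_swap Bp_def by (intro sum.cong refl) (simp add: mn_def sum_distrib_left)

lemma A0_lim: "A0 \<longlonglongrightarrow> lim A0"
  using A0_conv by (simp add: convergent_LIMSEQ_iff)

lemma Pf_lim: "(\<lambda>R. Pf n R) \<longlonglongrightarrow> 1 / bb n"
proof -
  have ev: "eventually (\<lambda>R. (-1)^n * (A0 (R - 2*n) - A0 (Suc R)) + 1 / bb n = Pf n R) sequentially"
    using eventually_ge_at_top[of "2*n"]
  proof eventually_elim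
    case (elim R)
    then have R: "R = n + (R - n)" by simp
    have "Pf n R = Pf n (n + (R - n))" using R by simp
    also have "\<dots> = (-1)^n * (AZ (int (R-n) - int n) - A0 (n + (R-n) + 1)) + 1 / bb n" by (rule Pf_closed)
    also have "AZ (int (R-n) - int n) = A0 (R - 2*n)"
    proof -
      have "nat \<bar>int (R-n) - int n\<bar> = R - 2*n" using elim by simp
      then show ?thesis unfolding AZ_def by (simp only:)
    qed
    also have "n + (R - n) + 1 = Suc R" using elim by simp
    finally show ?case by simp
  qed
  have l1: "(\<lambda>R. A0 (R - 2*n)) \<longlonglongrightarrow> lim A0"
    by (rule LIMSEQ_offset[where k="2*n"]) (simp add: A0_lim)
  have l2: "(\<lambda>R. A0 (Suc R)) \<longlonglongrightarrow> lim A0"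
    using A0_lim by (rule LIMSEQ_Suc)
  have "(\<lambda>R. (-1)^n * (A0 (R - 2*n) - A0 (Suc R)) + 1 / bb n) \<longlonglongrightarrow> (-1)^n * (lim A0 - lim A0) + 1 / bb n"
    by (intro tendsto_intros l1 l2)
  then have "(\<lambda>R. (-1)^n * (A0 (R - 2*n) - A0 (Suc R)) + 1 / bb n) \<longlonglongrightarrow> 1 / bb n" by simp
  then show ?thesis using tendsto_cong[OF ev] by simp
qed

lemma Pf_bound: "n < R \<Longrightarrow> \<bar>Pf n R\<bar> \<le> 3"
proof -
  assume nR: "n < R"
  then have "Pf n R = Pf n (n + (R - n))" by simp
  also have "\<dots> = (-1)^n * (AZ (int (R-n) - int n) - A0 (n + (R-n) + 1)) + 1 / bb n" by (rule Pf_closed)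
  finally have e: "Pf n R = \<dots>" .
  have "\<bar>AZ (int (R-n) - int n)\<bar> \<le> 1" by (simp add: AZ_def A0_bound)
  moreover have "\<bar>A0 (n + (R-n) + 1)\<bar> \<le> 1" by (rule A0_bound)
  moreover have "\<bar>1 / bb n\<bar> \<le> 1" using bb_ge1[of n] by simp
  moreover have "\<bar>(-1::real)^n * (AZ (int (R-n) - int n) - A0 (n + (R-n) + 1))\<bar> = \<bar>AZ (int (R-n) - int n) - A0 (n + (R-n) + 1)\<bar>"
    by (simp add: abs_mult power_abs)
  moreover have "\<bar>(-1::real)^n * (AZ (int (R-n) - int n) - A0 (n + (R-n) + 1)) + 1 / bb n\<bar> \<le> \<bar>(-1::real)^n * (AZ (int (R-n) - int n) - A0 (n + (R-n) + 1))\<bar> + \<bar>1 / bb n\<bar>"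
    by (rule abs_triangle_ineq)
  moreover have "\<bar>AZ (int (R-n) - int n) - A0 (n + (R-n) + 1)\<bar> \<le> \<bar>AZ (int (R-n) - int n)\<bar> + \<bar>A0 (n + (R-n) + 1)\<bar>"
    by (rule abs_triangle_ineq4)
  ultimately show ?thesis unfolding e by linarith
qed

lemma XA_lim:
  assumes "k \<ge> 1"
  shows "(\<lambda>R. XA k R) \<longlonglongrightarrow> lam (2*k+1)"
proof -
  have "(\<lambda>R. \<Sum>n<R. (1 / bb n ^ (2*k)) * Pf n R) \<longlonglongrightarrow> (\<Sum>n. (1 / bb n ^ (2*k)) * (1 / bb n))"
  proof (rule tannery_fin)
    show "(\<lambda>R. (1 / bb n ^ (2*k)) * Pf n R) \<longlonglongrightarrow> (1 / bb n ^ (2*k)) * (1 / bb n)" for n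
      by (intro tendsto_intros Pf_lim)
    show "\<bar>(1 / bb n ^ (2*k)) * Pf n R\<bar> \<le> 3 * (1 / bb n ^ 2)" if "n < R" for n R
    proof -
      have a: "\<bar>1 / bb n ^ (2*k)\<bar> \<le> 1 / bb n ^ 2"
        using inv_bb_pow_le[of "2*k" n] assms bb_pos[of n] by simp
      show ?thesis unfolding abs_mult using mult_mono[OF a Pf_bound[OF that]] by (simp add: mult.commute)
    qed
    show "summable (\<lambda>n. 3 * (1 / bb n ^ 2))" by (intro summable_mult summable_bb_sq)
  qed
  moreover have "(\<lambda>n. (1 / bb n ^ (2*k)) * (1 / bb n)) = (\<lambda>n. 1 / bb n ^ (2*k+1))" by (simp add: field_simps)
  ultimately show ?thesis by (simp add: XA_def lam_def)
qed



lemma Bp_lim: "(\<lambda>R. Bp e (R - n)) \<longlonglongrightarrow> bet e" if "e \<ge> 2"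
proof (rule LIMSEQ_offset[where k=n])
  show "(\<lambda>R. Bp e (R + n - n)) \<longlonglongrightarrow> bet e"
    using summable_LIMSEQ[OF summable_bet[OF that]] by (simp add: Bp_def[abs_def] bet_def)
qed

lemma Bp_bound: "\<bar>Bp e x\<bar> \<le> 1"
proof -
  have "\<bar>\<Sum>m<x. (-1)^m * (1 / NN m ^ e)\<bar> \<le> 1 / NN 0 ^ e"
  proof (rule alt_abs_bound)
    show "1 / NN (Suc i) ^ e \<le> 1 / NN i ^ e" for i
      using NN_pos[of i] by (intro divide_left_mono power_mono) (auto simp: NN_def)
    show "0 \<le> 1 / NN i ^ e" for i using NN_pos[of i] by simp
  qed
  moreover have "1 / NN 0 ^ e \<le> 1" using NN_ge2[of 0] by (simp add: one_le_power)
  ultimately show ?thesis by (simp add: Bp_def)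
qed

lemma Tri_monoi_lim:
  assumes "i \<ge> 2" "e \<ge> 2"
  shows "(\<lambda>R. \<Sum>n<R. (1 / bb n ^ i) * Bp e (R-n)) \<longlonglongrightarrow> lam i * bet e"
proof -
  have "(\<lambda>R. \<Sum>n<R. (1 / bb n ^ i) * Bp e (R-n)) \<longlonglongrightarrow> (\<Sum>n. (1 / bb n ^ i) * bet e)"
  proof (rule tannery_fin)
    show "(\<lambda>R. (1 / bb n ^ i) * Bp e (R-n)) \<longlonglongrightarrow> (1 / bb n ^ i) * bet e" for n
      by (intro tendsto_intros Bp_lim assms)
    show "\<bar>(1 / bb n ^ i) * Bp e (R-n)\<bar> \<le> 1 * (1 / bb n ^ 2)" for n R
    proof -
      have a: "\<bar>1 / bb n ^ i\<bar> \<le> 1 / bb n ^ 2"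
        using inv_bb_pow_le[of i n] assms bb_pos[of n] by simp
      show ?thesis unfolding abs_mult using mult_mono[OF a Bp_bound] by (simp add: mult.commute)
    qed
    show "summable (\<lambda>n. 1 * (1 / bb n ^ 2))" using summable_bb_sq by simp
  qed
  moreover have "(\<Sum>n. (1 / bb n ^ i) * bet e) = lam i * bet e"
    unfolding lam_def by (rule suminf_mult2[symmetric]) (rule summable_lam[OF assms(1)])
  ultimately show ?thesis by simp
qed

lemma sqrt_2x: "sqrt (real (2*m+2)) \<le> 2 * sqrt (real (Suc m))"
proof -
  have "sqrt (real (2*m+2)) = sqrt 2 * sqrt (real (Suc m))" by (simp add: real_sqrt_mult[symmetric])
  moreover have "sqrt (2::real) \<le> 2"
  proof -
    have "sqrt (2::real) \<le> sqrt 4" by (rule real_sqrt_le_mono) simp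
    then show ?thesis by simp
  qed
  ultimately show ?thesis by (simp add: mult_right_mono)
qed

definition Dq :: "nat \<Rightarrow> nat \<Rightarrow> real" where "Dq m R = H0 (R - m) - Qf m R / 2"

lemma Dq_big:
  assumes "2*m+1 \<le> R"
  shows "Dq m R = ((H0 ((R-2*m-1) + (m+1)) - H0 (R-2*m-1)) - (H0 ((R-m) + (m+1)) - H0 (R-m))) / 2"
proof -
  have "Qf m R = Qf m (m + (R-m))" using assms by simp
  also have "\<dots> = H0 (m + (R-m) + 1) + HZ (int (R-m) - int m - 1)" by (rule Qf_closed)
  also have "HZ (int (R-m) - int m - 1) = H0 (R - 2*m - 1)"
  proof -
    have "int (R-m) - int m - 1 \<ge> 0" "nat (int (R-m) - int m - 1) = R - 2*m - 1" using assms by auto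
    then show ?thesis unfolding HZ_def by (simp only: if_True)
  qed
  finally have q: "Qf m R = H0 (m + (R-m) + 1) + H0 (R - 2*m - 1)" .
  have e1: "(R-2*m-1) + (m+1) = R - m" and e2: "(R-m) + (m+1) = m + (R-m) + 1" using assms by auto
  show ?thesis unfolding Dq_def q e1 e2 by (simp add: field_simps)
qed

lemma Dq_lim: "(\<lambda>R. Dq m R) \<longlonglongrightarrow> 0"
proof (rule Lim_null_comparison)
  define u where "u R = real (m+1) / (2 * real (R - 2*m - 1) + 1)" for R
  show "eventually (\<lambda>R. norm (Dq m R) \<le> u R) sequentially"
    using eventually_ge_at_top[of "2*m+1"]
  proof eventually_elim
    case (elim R)
    define X where "X = H0 ((R-2*m-1) + (m+1)) - H0 (R-2*m-1)"
    define Y where "Y = H0 ((R-m) + (m+1)) - H0 (R-m)"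
    have X0: "0 \<le> X" "X \<le> u R"
      unfolding X_def u_def by (rule H0_shift_nonneg) (rule H0_shift_le2)
    have "Y \<le> real (m+1) / (2 * real (R-m) + 1)"
      unfolding Y_def by (rule H0_shift_le2)
    also have "\<dots> \<le> u R" unfolding u_def using elim by (intro divide_left_mono) auto
    finally have Y1: "Y \<le> u R" .
    have Y0: "0 \<le> Y" unfolding Y_def by (rule H0_shift_nonneg)
    have "Dq m R = (X - Y) / 2" using Dq_big[OF elim] by (simp add: X_def Y_def)
    then show ?case using X0 Y0 Y1 by simp
  qed
  show "u \<longlonglongrightarrow> 0"
  proof (rule LIMSEQ_offset[where k="2*m+1"])
    have "(\<lambda>R. real (m+1) / (2 * real R + 1)) \<longlonglongrightarrow> 0" by real_asymp
    then show "(\<lambda>R. u (R + (2*m+1))) \<longlonglongrightarrow> 0" by (simp add: u_def)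
  qed
qed

lemma Dq_bound:
  assumes "m < R"
  shows "\<bar>Dq m R\<bar> \<le> 6 * sqrt (real (Suc m))"
proof (cases "2*m+1 \<le> R")
  case True
  define X where "X = H0 ((R-2*m-1) + (m+1)) - H0 (R-2*m-1)"
  define Y where "Y = H0 ((R-m) + (m+1)) - H0 (R-m)"
  have "0 \<le> X" "X \<le> H0 (m+1)" "0 \<le> Y" "Y \<le> H0 (m+1)"
    unfolding X_def Y_def by (rule H0_shift_nonneg H0_shift_le)+
  moreover have "H0 (m+1) \<le> 2 * sqrt (real (Suc m))" using H0_sqrt[of "m+1"] by simp
  moreover have "Dq m R = (X - Y) / 2" using Dq_big[OF True] by (simp add: X_def Y_def)
  moreover have "0 \<le> sqrt (real (Suc m))" by simp
  ultimately show ?thesis by simp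
next
  case False
  have "Qf m R = Qf m (m + (R-m))" using assms by simp
  also have "\<dots> = H0 (m + (R-m) + 1) + HZ (int (R-m) - int m - 1)" by (rule Qf_closed)
  also have "HZ (int (R-m) - int m - 1) = - H0 (2*m+1-R)"
  proof -
    have "\<not> (int (R-m) - int m - 1 \<ge> 0)" "nat (- (int (R-m) - int m - 1)) = 2*m+1-R" using assms False by auto
    then show ?thesis unfolding HZ_def by (simp only: if_False)
  qed
  also have "m + (R-m) + 1 = (2*m+1-R) + (2*R - 2*m)" using assms False by auto
  finally have q: "Qf m R = H0 ((2*m+1-R) + (2*R - 2*m)) - H0 (2*m+1-R)" by simp
  define Z where "Z = H0 ((2*m+1-R) + (2*R - 2*m)) - H0 (2*m+1-R)"
  have Z0: "0 \<le> Z" unfolding Z_def by (rule H0_shift_nonneg)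
  have "Z \<le> H0 (2*R-2*m)" unfolding Z_def by (rule H0_shift_le)
  also have "\<dots> \<le> H0 (2*m+2)" using assms False by (intro H0_mono) auto
  finally have Z: "0 \<le> Z" "Z \<le> H0 (2*m+2)" using Z0 by auto
  have a: "0 \<le> H0 (R-m)" "H0 (R-m) \<le> H0 (m+1)" using H0_nonneg H0_mono[of "R-m" "m+1"] False by auto
  have b: "H0 (m+1) \<le> 2 * sqrt (real (Suc m))" using H0_sqrt[of "m+1"] by simp
  have c: "H0 (2*m+2) \<le> 4 * sqrt (real (Suc m))" using H0_sqrt[of "2*m+2"] sqrt_2x[of m] by simp
  have "Dq m R = H0 (R - m) - Z / 2" unfolding Dq_def q Z_def ..
  then show ?thesis using Z a b c by (simp add: abs_le_iff) 
qed

lemma Dterm_lim: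
  assumes "k \<ge> 1"
  shows "(\<lambda>R. \<Sum>m<R. ((-1)^m / NN m ^ (2*k)) * Dq m R) \<longlonglongrightarrow> 0"
proof -
  have "(\<lambda>R. \<Sum>m<R. ((-1)^m / NN m ^ (2*k)) * Dq m R) \<longlonglongrightarrow> (\<Sum>m. (0::real))"
  proof (rule tannery_fin)
    show "(\<lambda>R. ((-1)^m / NN m ^ (2*k)) * Dq m R) \<longlonglongrightarrow> 0" for m
      by (rule tendsto_mult_right_zero) (rule Dq_lim)
    show "\<bar>((-1)^m / NN m ^ (2*k)) * Dq m R\<bar> \<le> (1 / NN m ^ 2) * (6 * sqrt (real (Suc m)))" if "m < R" for m R
    proof -
      have a: "\<bar>(-1)^m / NN m ^ (2*k)\<bar> \<le> 1 / NN m ^ 2"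
        using inv_NN_pow_le[of "2*k" m] assms NN_pos[of m] by (simp add: abs_mult power_abs)
      show ?thesis unfolding abs_mult using mult_mono[OF a Dq_bound[OF that]] by simp
    qed
    show "summable (\<lambda>m. (1 / NN m ^ 2) * (6 * sqrt (real (Suc m))))"
    proof -
      have "(\<lambda>m. (1 / NN m ^ 2) * (6 * sqrt (real (Suc m)))) = (\<lambda>m. (3/2) * (sqrt (real (Suc m)) / (real (Suc m))^2))"
      proof (rule ext)
        fix m
        have "NN m ^ 2 = 4 * (real (Suc m))^2" by (simp add: NN_def power2_eq_square algebra_simps)
        then show "(1 / NN m ^ 2) * (6 * sqrt (real (Suc m))) = (3/2) * (sqrt (real (Suc m)) / (real (Suc m))^2)"
          by simp
      qed
      then show ?thesis using summable_mult[OF summable_32, of "3/2"] by simp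
    qed
  qed
  then show ?thesis by simp
qed



definition Gs :: "nat \<Rightarrow> nat \<Rightarrow> real" where "Gs k m = (\<Sum>n<Suc m. gk k n m)"
definition W4 :: "nat \<Rightarrow> real" where "W4 k = (\<Sum>m. (-1)^m * Gs k m)"

lemma mono_nonneg: "0 \<le> mn k i n m"
  using bb_pos[of n] NN_pos[of m] by (simp add: mn_def)
lemma gk_nonneg: "0 \<le> gk k n m"
  unfolding gk_def by (intro sum_nonneg) (simp add: mono_nonneg)
lemma mono_anti: "mn k i n (Suc m) \<le> mn k i n m"
  unfolding mn_def using bb_pos[of n] NN_pos[of m]
  by (intro divide_left_mono mult_left_mono power_mono mult_pos_pos zero_less_power) (auto simp: NN_def)
lemma gk_anti: "gk k n (Suc m) \<le> gk k n m"
  unfolding gk_def by (intro sum_mono mono_anti)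
lemma Gs_nonneg: "0 \<le> Gs k m" unfolding Gs_def by (intro sum_nonneg gk_nonneg)

lemma sum_if_le1: "Suc m \<le> L \<Longrightarrow> (\<Sum>n<L. if n \<le> m then f n else 0) = (\<Sum>n<Suc m. f n :: real)"
proof -
  assume a: "Suc m \<le> L"
  have "(\<Sum>n<L. if n \<le> m then f n else 0) = (\<Sum>n\<in>{n\<in>{..<L}. n \<le> m}. f n)"
    by (rule sum.inter_filter[symmetric]) simp
  also have "{n\<in>{..<L}. n \<le> m} = {..<Suc m}" using a by auto
  finally show ?thesis .
qed

lemma sum_if_le2: "L \<le> Suc m \<Longrightarrow> (\<Sum>n<L. if n \<le> m then f n else 0) = (\<Sum>n<L. f n :: real)"
  by (intro sum.cong refl) auto

lemma sum_split_at: "(h::nat) \<le> R \<Longrightarrow> (\<Sum>m<R. f m) = (\<Sum>m<h. f m) + (\<Sum>m\<in>{h..<R}. f m :: real)"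
proof -
  assume hR: "h \<le> R"
  have "sum f {0..<h} + sum f {h..<R} = sum f {0..<R}" by (rule sum.atLeastLessThan_concat) (use hR in auto)
  then show ?thesis by (simp add: atLeast0LessThan)
qed

lemma TL_close:
  fixes k R :: nat
  defines "h \<equiv> Suc R div 2"
  shows "\<bar>TL k R - (\<Sum>m<h. (-1)^m * Gs k m)\<bar> \<le> Gs k h"
proof -
  define c where "c m = (\<Sum>n<R-m. gk k n m)" for m
  have hR: "h \<le> R" unfolding h_def by linarith
  have "TL k R = (\<Sum>m<h. (-1)^m * (\<Sum>n<R-m. if n \<le> m then gk k n m else 0))
      + (\<Sum>m\<in>{h..<R}. (-1)^m * (\<Sum>n<R-m. if n \<le> m then gk k n m else 0))"
    unfolding TL_def by (rule sum_split_at[OF hR])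
  also have "(\<Sum>m<h. (-1)^m * (\<Sum>n<R-m. if n \<le> m then gk k n m else 0)) = (\<Sum>m<h. (-1)^m * Gs k m)"
    unfolding Gs_def
  proof (intro sum.cong refl)
    fix m assume "m \<in> {..<h}"
    then have "Suc m \<le> R - m" unfolding h_def by auto
    then show "(-1)^m * (\<Sum>n<R-m. if n \<le> m then gk k n m else 0) = (-1)^m * (\<Sum>n<Suc m. gk k n m)"
      by (simp add: sum_if_le1)
  qed
  also have "(\<Sum>m\<in>{h..<R}. (-1)^m * (\<Sum>n<R-m. if n \<le> m then gk k n m else 0)) = (\<Sum>m\<in>{h..<R}. (-1)^m * c m)"
  proof (intro sum.cong refl)
    fix m assume "m \<in> {h..<R}"
    then have "R - m \<le> Suc m" unfolding h_def by auto
    then show "(-1)^m * (\<Sum>n<R-m. if n \<le> m then gk k n m else 0) = (-1)^m * c m"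
      by (simp add: sum_if_le2 c_def)
  qed
  finally have e: "TL k R - (\<Sum>m<h. (-1)^m * Gs k m) = (\<Sum>m\<in>{h..<R}. (-1)^m * c m)" by simp
  have c_anti: "c (Suc m) \<le> c m" for m
  proof -
    have "c (Suc m) \<le> (\<Sum>n<R - Suc m. gk k n m)" unfolding c_def by (intro sum_mono gk_anti)
    also have "\<dots> \<le> c m" unfolding c_def by (intro sum_mono2) (auto simp: gk_nonneg)
    finally show ?thesis .
  qed
  have c_nn: "0 \<le> c m" for m unfolding c_def by (intro sum_nonneg gk_nonneg)
  have "(\<Sum>m\<in>{h..<R}. (-1)^m * c m) = (\<Sum>i\<in>{0..<R-h}. (-1)^(i+h) * c (i+h))"
    using sum.shift_bounds_nat_ivl[of "\<lambda>m. (-1)^m * c m" 0 h "R-h"] hR by simp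
  also have "\<dots> = (-1)^h * (\<Sum>i<R-h. (-1)^i * c (h+i))"
    by (simp add: sum_distrib_left power_add lessThan_atLeast0 algebra_simps)
  finally have e2: "\<bar>\<Sum>m\<in>{h..<R}. (-1)^m * c m\<bar> = \<bar>\<Sum>i<R-h. (-1)^i * c (h+i)\<bar>"
    by (simp add: abs_mult power_abs)
  have "\<bar>\<Sum>i<R-h. (-1)^i * c (h+i)\<bar> \<le> c (h+0)"
    by (rule alt_abs_bound) (auto intro: c_anti c_nn simp del: add_0_right)
  also have "c (h+0) \<le> Gs k h"
  proof -
    have sub: "R - h \<le> Suc h" unfolding h_def by auto
    show ?thesis unfolding c_def Gs_def add_0_right using sub by (intro sum_mono2) (auto simp: gk_nonneg)
  qed
  finally show ?thesis using e e2 by simp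
qed

lemma h_filterlim: "filterlim (\<lambda>R. Suc R div 2) at_top sequentially"
  unfolding filterlim_at_top
proof
  fix Z :: nat
  show "eventually (\<lambda>R. Z \<le> Suc R div 2) sequentially"
    using eventually_ge_at_top[of "2*Z"] by eventually_elim auto
qed

lemma TL_lim:
  assumes sm: "summable (\<lambda>m. (-1)^m * Gs k m)"
  shows "(\<lambda>R. TL k R) \<longlonglongrightarrow> W4 k"
proof -
  define h where "h R = Suc R div 2" for R
  have hlim: "filterlim h at_top sequentially" unfolding h_def by (rule h_filterlim)
  have G0: "(\<lambda>m. Gs k m) \<longlonglongrightarrow> 0"
  proof -
    have "(\<lambda>m. (-1)^m * Gs k m) \<longlonglongrightarrow> 0" using sm by (rule summable_LIMSEQ_zero)
    then have "(\<lambda>m. \<bar>(-1)^m * Gs k m\<bar>) \<longlonglongrightarrow> 0" by (rule tendsto_rabs_zero)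
    then show ?thesis by (simp add: abs_mult power_abs Gs_nonneg)
  qed
  have l1: "(\<lambda>R. \<Sum>m<h R. (-1)^m * Gs k m) \<longlonglongrightarrow> W4 k"
    using filterlim_compose[OF summable_LIMSEQ[OF sm] hlim] by (simp add: W4_def)
  have l2: "(\<lambda>R. Gs k (h R)) \<longlonglongrightarrow> 0"
    using filterlim_compose[OF G0 hlim] by simp
  have l3: "(\<lambda>R. TL k R - (\<Sum>m<h R. (-1)^m * Gs k m)) \<longlonglongrightarrow> 0"
  proof (rule Lim_null_comparison[OF _ l2])
    show "eventually (\<lambda>R. norm (TL k R - (\<Sum>m<h R. (-1)^m * Gs k m)) \<le> Gs k (h R)) sequentially"
      by (intro always_eventually allI) (simp add: h_def TL_close)
  qed
  have "(\<lambda>R. (\<Sum>m<h R. (-1)^m * Gs k m) + (TL k R - (\<Sum>m<h R. (-1)^m * Gs k m))) \<longlonglongrightarrow> W4 k + 0"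
    by (intro tendsto_add l1 l3)
  then show ?thesis by simp
qed



definition Tk :: "nat \<Rightarrow> nat \<Rightarrow> nat \<Rightarrow> real" where
  "Tk k k1 m = (-1)^m * (\<Sum>n<Suc m. mn k k1 n m)"

lemma H0_bb: "H0 x = (\<Sum>n<x. 1 / bb n)" by (simp add: H0_def bb_def)

lemma Tk_summable_a:
  assumes "1 \<le> k1" "k1 < 2*k"
  shows "summable (Tk k k1)"
proof (rule summable_comparison_test'[where N=0])
  show "summable (\<lambda>m. (1/2) * (sqrt (real (Suc m)) / (real (Suc m))^2))"
    by (intro summable_mult summable_32)
  fix m :: nat
  have b1: "mn k k1 n m \<le> 1 / (bb n * NN m ^ 2)" for n
  proof -
    have "bb n ^ 1 \<le> bb n ^ k1" using assms bb_ge1[of n] by (intro power_increasing) auto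
    moreover have "NN m ^ 2 \<le> NN m ^ (Suc (2*k) - k1)" using assms NN_ge2[of m] by (intro power_increasing) auto
    ultimately have "bb n * NN m ^ 2 \<le> bb n ^ k1 * NN m ^ (Suc (2*k) - k1)"
      using bb_pos[of n] NN_pos[of m] by (intro mult_mono) auto
    then show ?thesis unfolding mn_def using bb_pos[of n] NN_pos[of m] by (intro divide_left_mono) auto
  qed
  have "norm (Tk k k1 m) = (\<Sum>n<Suc m. mn k k1 n m)"
    by (simp add: Tk_def abs_mult power_abs sum_nonneg mono_nonneg)
  also have "\<dots> \<le> (\<Sum>n<Suc m. 1 / (bb n * NN m ^ 2))" by (intro sum_mono b1)
  also have "\<dots> = H0 (Suc m) / NN m ^ 2" unfolding H0_bb sum_divide_distrib by (simp del: sum.lessThan_Suc)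
  also have "\<dots> \<le> 2 * sqrt (real (Suc m)) / NN m ^ 2"
    using H0_sqrt[of "Suc m"] NN_pos[of m] by (intro divide_right_mono) auto
  also have "\<dots> = (1/2) * (sqrt (real (Suc m)) / (real (Suc m))^2)"
  proof -
    have "NN m ^ 2 = 4 * (real (Suc m))^2" by (simp add: NN_def power2_eq_square algebra_simps)
    then show ?thesis by simp
  qed
  finally show "norm (Tk k k1 m) \<le> (1/2) * (sqrt (real (Suc m)) / (real (Suc m))^2)" .
qed

lemma Tk_summable_b:
  assumes "k \<ge> 1"
  shows "summable (Tk k (2*k))"
proof -
  define S where "S m = (\<Sum>n<Suc m. 1 / bb n ^ (2*k))" for m
  define a where "a m = S m / NN m" for m
  have ma: "(\<Sum>n<Suc m. mn k (2*k) n m) = a m" for m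
    unfolding a_def S_def mn_def sum_divide_distrib by (simp del: sum.lessThan_Suc)
  have S1: "1 \<le> S m" for m
  proof -
    have "1 / bb 0 ^ (2*k) \<le> S m" unfolding S_def
      by (rule member_le_sum) (auto simp: bb_pos less_imp_le)
    then show ?thesis by (simp add: bb_def)
  qed
  have Slam: "S m \<le> lam (2*k)" for m
    unfolding S_def lam_def using assms
    by (intro sum_le_suminf summable_lam) (auto simp: bb_pos less_imp_le)
  have "summable (\<lambda>m. (-1)^m * a m)"
  proof (rule summable_Leibniz'(1))
    show "a \<longlonglongrightarrow> 0"
    proof (rule Lim_null_comparison)
      show "eventually (\<lambda>m. norm (a m) \<le> lam (2*k) / (2 * real m + 2)) sequentially"
      proof (intro always_eventually allI)
        fix m
        have "\<bar>S m\<bar> \<le> lam (2*k)" using S1[of m] Slam[of m] by simp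
        then show "norm (a m) \<le> lam (2*k) / (2 * real m + 2)"
          by (simp add: a_def NN_def divide_right_mono)
      qed
      show "(\<lambda>m. lam (2*k) / (2 * real m + 2)) \<longlonglongrightarrow> 0" by real_asymp
    qed
    show "0 \<le> a m" for m using S1[of m] NN_pos[of m] by (simp add: a_def)
    show "a (Suc m) \<le> a m" for m
    proof -
      define t where "t = 1 / bb (Suc m) ^ (2*k)"
      have St: "S (Suc m) = S m + t" by (simp add: S_def t_def)
      have t1: "t \<le> 1 / bb (Suc m)"
        unfolding t_def using bb_ge1[of "Suc m"] assms
        by (intro divide_left_mono power_increasing[where n=1, simplified]) (auto simp: bb_pos)
      have "NN m * t \<le> NN m / bb (Suc m)" using t1 NN_pos[of m] by (simp add: mult_left_mono divide_inverse)
      also have "\<dots> \<le> 1" using NN_pos[of m] bb_pos[of "Suc m"] by (simp add: NN_def bb_def)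
      finally have "NN m * t \<le> 2 * S m" using S1[of m] by linarith
      then have "NN m * (S m + t) \<le> NN (Suc m) * S m" by (simp add: NN_def algebra_simps)
      then show ?thesis unfolding a_def St using NN_pos[of m] NN_pos[of "Suc m"]
        by (simp add: divide_le_eq_1 field_simps)
    qed
  qed
  then show ?thesis unfolding Tk_def[abs_def] ma .
qed

lemma Tk_summable:
  assumes "k \<ge> 1" "1 \<le> k1" "k1 \<le> 2*k"
  shows "summable (Tk k k1)"
proof (cases "k1 = 2*k")
  case True then show ?thesis using Tk_summable_b[OF assms(1)] by simp
next
  case False then show ?thesis using Tk_summable_a assms by simp
qed



lemma Gs_Tk: "(-1)^m * Gs k m = (\<Sum>k1=1..2*k. Tk k k1 m)"
  unfolding Gs_def gk_def Tk_def sum_distrib_left[symmetric]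
  by (subst sum.swap) (rule refl)

lemma W4_summable: "k \<ge> 1 \<Longrightarrow> summable (\<lambda>m. (-1)^m * Gs k m)"
  unfolding Gs_Tk by (intro summable_sum Tk_summable) auto

lemma W4_eq: "k \<ge> 1 \<Longrightarrow> W4 k = (\<Sum>k1=1..2*k. suminf (Tk k k1))"
  unfolding W4_def Gs_Tk by (intro suminf_sum Tk_summable) auto

lemma TL_decomp:
  assumes "k \<ge> 1"
  shows "TL k R = XA k R / 2 + (\<Sum>m<R. ((-1)^m / NN m ^ (2*k)) * Dq m R)
     + (\<Sum>j=2..k. \<Sum>n<R. (1 / bb n ^ (2*j-1)) * Bp (Suc (2*k) - (2*j-1)) (R-n))"
proof -
  have s: "{1..k} = insert 1 {2..k}" using assms by auto
  have o: "Tri R (\<lambda>n m. (-1)^m * Od k n m) = Tri R (\<lambda>n m. (-1)^m * mn k 1 n m)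
      + (\<Sum>j=2..k. \<Sum>n<R. (1 / bb n ^ (2*j-1)) * Bp (Suc (2*k) - (2*j-1)) (R-n))"
    unfolding Od_split s by (simp add: Tri_monoi)
  have d: "Tri R (\<lambda>n m. (-1)^m * mn k 1 n m) - XB k R / 2 = (\<Sum>m<R. ((-1)^m / NN m ^ (2*k)) * Dq m R)"
    unfolding Tri_mono1 XB_def Dq_def sum_divide_distrib sum_subtractf[symmetric]
    by (intro sum.cong refl) (simp only: right_diff_distrib times_divide_eq_right)
  show ?thesis using fin_id[of k R] o d by (simp add: algebra_simps)
qed

lemma W4_value:
  assumes "k \<ge> 1"
  shows "W4 k = lam (2*k+1) / 2 + (\<Sum>j=2..k. lam (2*j-1) * bet (Suc (2*k) - (2*j-1)))"
proof -
  have "(\<lambda>R. XA k R / 2 + (\<Sum>m<R. ((-1)^m / NN m ^ (2*k)) * Dq m R)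
     + (\<Sum>j=2..k. \<Sum>n<R. (1 / bb n ^ (2*j-1)) * Bp (Suc (2*k) - (2*j-1)) (R-n)))
     \<longlonglongrightarrow> lam (2*k+1) / 2 + 0 + (\<Sum>j=2..k. lam (2*j-1) * bet (Suc (2*k) - (2*j-1)))"
  proof (intro tendsto_add tendsto_divide XA_lim Dterm_lim assms tendsto_sum tendsto_const)
    fix j assume j: "j \<in> {2..k}"
    show "(\<lambda>R. \<Sum>n<R. (1 / bb n ^ (2*j-1)) * Bp (Suc (2*k) - (2*j-1)) (R-n))
       \<longlonglongrightarrow> lam (2*j-1) * bet (Suc (2*k) - (2*j-1))"
      by (rule Tri_monoi_lim) (use j in auto)
  qed simp
  then have "(\<lambda>R. TL k R) \<longlonglongrightarrow> lam (2*k+1) / 2 + (\<Sum>j=2..k. lam (2*j-1) * bet (Suc (2*k) - (2*j-1)))"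
    unfolding TL_decomp[OF assms] by simp
  moreover have "(\<lambda>R. TL k R) \<longlonglongrightarrow> W4 k" by (rule TL_lim[OF W4_summable[OF assms]])
  ultimately show ?thesis using LIMSEQ_unique by blast
qed



lemma Tbar_eq:
  assumes "k \<ge> 1" "1 \<le> k1" "k1 \<le> 2*k"
  shows "Tbar k1 (2*k+1-k1) = 4 * suminf (Tk k k1)"
proof -
  define F where "F n2 = (\<Sum>n1\<in>{0<..<n2}. (-1)^n2 / ((2 * real n1 - 1) ^ k1 * (2 * real n2 - 2) ^ (2*k+1-k1)))" for n2
  have FS: "F (Suc (Suc m)) = Tk k k1 m" for m
  proof -
    have "{0<..<Suc (Suc m)} = Suc ` {..<Suc m}" by (auto simp: image_iff) (metis Suc_pred lessThan_iff less_Suc_eq_0_disj not_less_eq)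
    then have "F (Suc (Suc m)) = (\<Sum>n<Suc m. (-1)^(Suc (Suc m)) / ((2 * real (Suc n) - 1) ^ k1 * (2 * real (Suc (Suc m)) - 2) ^ (2*k+1-k1)))"
      unfolding F_def by (simp add: sum.reindex)
    also have "\<dots> = (\<Sum>n<Suc m. (-1)^m * mn k k1 n m)"
      by (intro sum.cong refl) (simp add: mn_def bb_def NN_def algebra_simps)
    finally show ?thesis unfolding Tk_def sum_distrib_left .
  qed
  have F0: "F 0 = 0" "F (Suc 0) = 0" by (simp_all add: F_def)
  have "Tk k k1 sums suminf (Tk k k1)" using Tk_summable[OF assms] by (rule summable_sums)
  then have "(\<lambda>m. F (Suc (Suc m))) sums suminf (Tk k k1)" by (simp add: FS)
  then have "(\<lambda>m. F (Suc m)) sums (suminf (Tk k k1) + F (Suc 0))" by (rule iffD1[OF sums_Suc_iff[of "\<lambda>m. F (Suc m)"]])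
  then have "(\<lambda>m. F (Suc m)) sums suminf (Tk k k1)" using F0 by simp
  then have "F sums (suminf (Tk k k1) + F 0)" by (rule iffD1[OF sums_Suc_iff])
  then have "F sums suminf (Tk k k1)" using F0 by simp
  then have "suminf F = suminf (Tk k k1)" by (rule sums_unique[symmetric])
  then show ?thesis by (simp add: Tbar_def F_def[abs_def])
qed

lemma W2_eq:
  assumes "k \<ge> 1"
  shows "W2 (2*k+1) = 4 * W4 k"
proof -
  have "W2 (2*k+1) = (\<Sum>k1=1..2*k. Tbar k1 (2*k+1-k1))" by (simp add: W2_def)
  also have "\<dots> = (\<Sum>k1=1..2*k. 4 * suminf (Tk k k1))"
    by (intro sum.cong refl Tbar_eq) (use assms in auto)
  also have "\<dots> = 4 * W4 k" by (simp add: W4_eq[OF assms] sum_distrib_left)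
  finally show ?thesis .
qed

lemma lam_zeta:
  assumes "s \<ge> 2"
  shows "lam s = (1 - 1/2^s) * zeta_nat s"
proof -
  define f where "f n = 1 / (real (Suc n)) ^ s" for n
  have sf: "summable f"
    by (rule summable_comparison_test'[OF summable_inv_sq, of 0])
       (use assms in \<open>auto simp: f_def intro!: divide_left_mono power_increasing\<close>)
  have "(\<lambda>i. sum f {i*2..<i*2+2}) sums zeta_nat s"
    using sums_group[OF summable_sums[OF sf], of 2] by (simp add: zeta_nat_def f_def[abs_def])
  moreover have "sum f {i*2..<i*2+2} = 1 / bb i ^ s + (1/2^s) * f i" for i
  proof -
    have "{i*2..<i*2+2} = {2*i, 2*i+1}" by auto
    moreover have "f (2*i) = 1 / bb i ^ s" by (simp add: f_def bb_def add.commute)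
    moreover have "f (2*i+1) = (1/2^s) * f i"
    proof -
      have "real (Suc (2*i+1)) = 2 * real (Suc i)" by simp
      moreover have "(2 * real (Suc i))^s = 2^s * real (Suc i)^s" by (rule power_mult_distrib)
      ultimately have "real (Suc (2*i+1)) ^ s = 2^s * real (Suc i)^s" by simp
      then show ?thesis unfolding f_def by simp
    qed
    ultimately show ?thesis by simp
  qed
  ultimately have "(\<lambda>i. 1 / bb i ^ s + (1/2^s) * f i) sums zeta_nat s" by simp
  moreover have "(\<lambda>i. 1 / bb i ^ s + (1/2^s) * f i) sums (lam s + (1/2^s) * zeta_nat s)"
    unfolding lam_def zeta_nat_def f_def[symmetric]
    by (intro sums_add sums_mult summable_sums summable_lam sf assms)
  ultimately have "zeta_nat s = lam s + (1/2^s) * zeta_nat s" by (rule sums_unique2)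
  then show ?thesis by (simp add: algebra_simps)
qed

lemma bet_zetabar:
  assumes "e \<ge> 2"
  shows "bet e = zetabar e / 2^e"
proof -
  have eq: "(\<lambda>m. (-1)^m / NN m ^ e) = (\<lambda>m. ((-1)^m / (real (Suc m)) ^ e) / 2^e)"
    by (rule ext) (simp add: NN_def power_mult_distrib[symmetric] algebra_simps)
  have sm: "summable (\<lambda>m. (-1)^m / (real (Suc m)) ^ e)"
  proof -
    have "summable (\<lambda>m. ((-1)^m / (real (Suc m)) ^ e) / 2^e)"
      using summable_bet[OF assms] unfolding eq .
    then have "summable (\<lambda>m. ((-1)^m / (real (Suc m)) ^ e) / 2^e * 2^e)" by (rule summable_mult2)
    then show ?thesis by simp
  qed
  have "bet e = (\<Sum>m. (-1)^m / (real (Suc m)) ^ e) / 2^e"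
    unfolding bet_def eq by (rule suminf_divide[OF sm])
  then show ?thesis using assms by (simp add: zetabar_def)
qed



theorem mainTheorem10:
  fixes k :: nat
  assumes "k \<ge> 1"
  shows "W2 (2 * k + 1) = 1 / 2 ^ (2 * k - 1) *
    (\<Sum>j = 1..k. (2 ^ (2 * j + 1) - 1) * zeta_nat (2 * j + 1) * zetabar (2 * k - 2 * j))"
proof -
  define S where "S = (\<Sum>j=1..k-1. lam (2*j+1) * bet (2*k-2*j))"
  have L: "W2 (2*k+1) = 2 * lam (2*k+1) + 4 * S"
  proof -
    have "(\<Sum>j=2..k. lam (2*j-1) * bet (Suc (2*k) - (2*j-1))) = (\<Sum>j=1..k-1. lam (2*(j+1)-1) * bet (Suc (2*k) - (2*(j+1)-1)))"
    proof -
      have "(\<Sum>j=2..k. lam (2*j-1) * bet (Suc (2*k) - (2*j-1))) = (\<Sum>j=1+1..(k-1)+1. lam (2*j-1) * bet (Suc (2*k) - (2*j-1)))"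
      proof -
        have "{2..k} = {1+1..(k-1)+1}" using assms by auto
        then show ?thesis by (simp only:)
      qed
      also have "\<dots> = (\<Sum>j=1..k-1. lam (2*(j+1)-1) * bet (Suc (2*k) - (2*(j+1)-1)))"
        by (rule sum.shift_bounds_cl_nat_ivl)
      finally show ?thesis .
    qed
    also have "\<dots> = S" unfolding S_def
    proof (intro sum.cong refl)
      fix j assume "j \<in> {1..k-1}"
      then have "2*(j+1)-1 = 2*j+1" "Suc (2*k) - (2*(j+1)-1) = 2*k-2*j" by auto
      then show "lam (2*(j+1)-1) * bet (Suc (2*k) - (2*(j+1)-1)) = lam (2*j+1) * bet (2*k-2*j)" by simp
    qed
    finally have "(\<Sum>j=2..k. lam (2*j-1) * bet (Suc (2*k) - (2*j-1))) = S" .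
    then show ?thesis using W2_eq[OF assms] W4_value[OF assms] by simp
  qed
  have zl: "(2 ^ (2 * j + 1) - 1) * zeta_nat (2 * j + 1) = 2 ^ (2*j+1) * lam (2*j+1)" if "j \<ge> 1" for j
  proof -
    have "lam (2*j+1) = (1 - 1/2^(2*j+1)) * zeta_nat (2*j+1)" by (rule lam_zeta) (use that in simp)
    then show ?thesis by (simp add: field_simps)
  qed
  have T1: "(2 ^ (2 * j + 1) - 1) * zeta_nat (2 * j + 1) * zetabar (2 * k - 2 * j)
      = 2^(2*k+1) * (lam (2*j+1) * bet (2*k-2*j))" if j: "j \<in> {1..k-1}" for j
  proof -
    have e: "2*k-2*j \<ge> 2" using j by auto
    have "zetabar (2*k-2*j) = 2^(2*k-2*j) * bet (2*k-2*j)" using bet_zetabar[OF e] by simp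
    moreover have pw: "(2::real)^(2*j+1) * 2^(2*k-2*j) = 2^(2*k+1)"
    proof -
      have "(2*j+1) + (2*k-2*j) = 2*k+1" using j by auto
      then have "(2::real)^((2*j+1) + (2*k-2*j)) = 2^(2*k+1)" by simp
      then show ?thesis by (simp only: power_add)
    qed
    moreover have "j \<ge> 1" using j by simp
    ultimately have "(2 ^ (2 * j + 1) - 1) * zeta_nat (2 * j + 1) * zetabar (2 * k - 2 * j)
       = ((2::real)^(2*j+1) * 2^(2*k-2*j)) * (lam (2*j+1) * bet (2*k-2*j))"
      unfolding zl[OF \<open>j \<ge> 1\<close>] by (simp only: ac_simps)
    then show ?thesis unfolding pw .
  qed
  have Tk: "(2 ^ (2 * k + 1) - 1) * zeta_nat (2 * k + 1) * zetabar (2 * k - 2 * k) = 2^(2*k) * lam (2*k+1)"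
    unfolding zl[OF assms] by (simp add: zetabar_def)
  have ins: "{1..k} = insert k {1..k-1}" using assms by auto
  have "(\<Sum>j = 1..k. (2 ^ (2 * j + 1) - 1) * zeta_nat (2 * j + 1) * zetabar (2 * k - 2 * j))
      = (2 ^ (2 * k + 1) - 1) * zeta_nat (2 * k + 1) * zetabar (2 * k - 2 * k)
        + (\<Sum>j = 1..k-1. (2 ^ (2 * j + 1) - 1) * zeta_nat (2 * j + 1) * zetabar (2 * k - 2 * j))"
    unfolding ins by (rule sum.insert) auto
  also have "(\<Sum>j = 1..k-1. (2 ^ (2 * j + 1) - 1) * zeta_nat (2 * j + 1) * zetabar (2 * k - 2 * j))
      = (\<Sum>j = 1..k-1. 2^(2*k+1) * (lam (2*j+1) * bet (2*k-2*j)))"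
    by (intro sum.cong refl T1)
  finally have "(\<Sum>j = 1..k. (2 ^ (2 * j + 1) - 1) * zeta_nat (2 * j + 1) * zetabar (2 * k - 2 * j))
      = 2^(2*k) * lam (2*k+1) + (\<Sum>j = 1..k-1. 2^(2*k+1) * (lam (2*j+1) * bet (2*k-2*j)))"
    unfolding Tk .
  also have "\<dots> = 2^(2*k) * lam (2*k+1) + 2^(2*k+1) * S"
    by (simp add: S_def sum_distrib_left)
  finally have R: "(\<Sum>j = 1..k. (2 ^ (2 * j + 1) - 1) * zeta_nat (2 * j + 1) * zetabar (2 * k - 2 * j))
      = 2^(2*k) * lam (2*k+1) + 2^(2*k+1) * S" .
  have p1: "(2::real)^(2*k) = 2 * 2^(2*k-1)"
  proof -
    have "2*k = Suc (2*k-1)" using assms by auto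
    then have "(2::real)^(2*k) = 2^(Suc (2*k-1))" by (simp only:)
    then show ?thesis by simp
  qed
  have p2: "(2::real)^(2*k+1) = 4 * 2^(2*k-1)"
    using p1 by simp
  show ?thesis unfolding R L p1 p2 by (simp add: field_simps)
qed


end
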